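(* Let $\tilde{\mathbf{P}}\in\mathbb{R}^{n\times n}$ and let $\mathbf{X}\in\{0,1\}^{n\times n}$ be a binary matrix with weighted indicator matrix $\tilde{\mathbf{X}}$ such that for all $i,j\in[n]$, $\tilde{\mathbf{P}}_{ij}=\max_k\tilde{\mathbf{P}}_{ik}$ if and only if $\mathbf{X}_{ij}=1$. Then for all $\epsilon>0$ there exist $\delta>0$ and $b>0$ such that for every $\tilde{\mathbf{Q}}\in\mathbb{R}^{n\times n}$ with $\|\tilde{\mathbf{P}}-\tilde{\mathbf{Q}}\|_F<\delta$, $$\|\mathsf{softmax}(b\cdot\tilde{\mathbf{Q}})-\tilde{\mathbf{X}}\|_F<\epsilon,$$ where the softmax is applied row-wise.
   Context: For a binary vector $\mathbf{x}\in\{0,1\}^n$ with at least one nonzero entry, its weighted indicator vector is $\mathbf{x}/\sum_i x_i$. The weighted indicator matrix $\tilde{\mathbf{X}}$ of a binary matrix $\mathbf{X}$ has as $i$-th row the weighted indicator vector of the $i$-th row of $\mathbf{X}$. *)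

theory Defs
  imports "HOL-Analysis.Analysis"
begin

definition frob_norm :: "real^'n^'m \<Rightarrow> real" where
  "frob_norm A = sqrt (\<Sum>i\<in>UNIV. \<Sum>j\<in>UNIV. (A $ i $ j)^2)"

definition binary_matrix :: "real^'n^'m \<Rightarrow> bool" where
  "binary_matrix X \<longleftrightarrow> (\<forall>i j. X $ i $ j = 0 \<or> X $ i $ j = 1)"

definition weighted_indicator :: "real^'n^'m \<Rightarrow> real^'n^'m" where
  "weighted_indicator X = (\<chi> i j. X $ i $ j / (\<Sum>k\<in>UNIV. X $ i $ k))"

definition softmax_rows :: "real^'n^'m \<Rightarrow> real^'n^'m" where
  "softmax_rows Q = (\<chi> i j. exp (Q $ i $ j) / (\<Sum>k\<in>UNIV. exp (Q $ i $ k)))"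

end

theory Submission
  imports Defs
begin

lemma frob_eq_norm: "frob_norm (A::real^'n^'m) = norm A"
proof -
  have "\<And>i. (norm (A $ i))\<^sup>2 = (\<Sum>j\<in>UNIV. (A $ i $ j)^2)"
    by (simp add: norm_vec_def L2_set_def sum_nonneg)
  then show ?thesis
    by (simp add: frob_norm_def norm_vec_def L2_set_def)
qed

lemma softmax_cont:
  fixes P :: "real^'n^'m"
  shows "isCont (\<lambda>Q. softmax_rows (b *\<^sub>R Q)) P"
proof -
  have pos: "\<And>i. (\<Sum>k\<in>UNIV. exp (b * P $ i $ k)) \<noteq> 0"
    by (metis (no_types) UNIV_not_empty exp_gt_zero finite less_irrefl sum_pos)
  show ?thesis
    unfolding isCont_def softmax_rows_def
    by (intro tendsto_vec_lambda tendsto_divide tendsto_exp tendsto_sum tendsto_vec_nth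
        tendsto_ident_at tendsto_scaleR tendsto_const) (simp add: pos)
qed

theorem lemmaF3:
  fixes P X :: "real^'n^'n"
  assumes "binary_matrix X"
    and "\<forall>i j. P $ i $ j = (MAX k. P $ i $ k) \<longleftrightarrow> X $ i $ j = 1"
  shows "\<forall>\<epsilon>>0. \<exists>\<delta>>0. \<exists>b>0. \<forall>Q :: real^'n^'n. frob_norm (P - Q) < \<delta> \<longrightarrow>
           frob_norm (softmax_rows (b *\<^sub>R Q) - weighted_indicator X) < \<epsilon>"
proof (intro allI impI)
  fix \<epsilon> :: real assume eps: "\<epsilon> > 0"
  define m where "m i = (MAX k. P $ i $ k)" for i
  have le: "P $ i $ k \<le> m i" for i k unfolding m_def by (simp add: Max_ge)
  have ex: "\<exists>k. P $ i $ k = m i" for i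
  proof -
    have "m i \<in> range (\<lambda>k. P $ i $ k)" unfolding m_def by (rule Max_in) auto
    then show ?thesis by auto
  qed
  have Xiff: "X $ i $ k = 1 \<longleftrightarrow> P $ i $ k = m i" for i k using assms(2) m_def by auto
  have X01: "X $ i $ k = 0 \<or> X $ i $ k = 1" for i k using assms(1) binary_matrix_def by auto
  have term_lim: "((\<lambda>b::real. exp (b * (P $ i $ k - m i))) \<longlongrightarrow> X $ i $ k) at_top" for i k
  proof (cases "P $ i $ k = m i")
    case True
    then have "X $ i $ k = 1" using Xiff by simp
    with True show ?thesis by simp
  next
    case False
    then have lt: "P $ i $ k - m i < 0" using le[of i k] by simp
    have X0: "X $ i $ k = 0" using X01 Xiff False by blast
    have "LIM b at_top. (P $ i $ k - m i) * b :> at_bot"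
      by (rule filterlim_tendsto_neg_mult_at_bot[OF tendsto_const lt filterlim_ident])
    then have "((\<lambda>b. exp ((P $ i $ k - m i) * b)) \<longlongrightarrow> 0) at_top"
      using exp_at_bot filterlim_compose by blast
    then show ?thesis using X0 by (simp add: mult.commute)
  qed
  have sumpos: "(\<Sum>k\<in>UNIV. X $ i $ k) \<noteq> 0" for i
  proof -
    obtain k0 where "P $ i $ k0 = m i" using ex by blast
    then have "X $ i $ k0 = 1" using Xiff by simp
    moreover have "(\<Sum>k\<in>UNIV. X $ i $ k) \<ge> X $ i $ k0"
      by (rule member_le_sum) (use X01 in auto, metis order.refl zero_le_one)
    ultimately show ?thesis by linarith
  qed
  have entry_eq: "exp (b * P $ i $ j) / (\<Sum>k\<in>UNIV. exp (b * P $ i $ k))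
      = exp (b * (P $ i $ j - m i)) / (\<Sum>k\<in>UNIV. exp (b * (P $ i $ k - m i)))" for b i j
  proof -
    have e: "exp (b * P $ i $ k) = exp (b * (P $ i $ k - m i)) * exp (b * m i)" for k
      by (simp add: algebra_simps flip: exp_add)
    show ?thesis unfolding e by (simp add: sum_distrib_right[symmetric])
  qed
  have lim: "((\<lambda>b. softmax_rows (b *\<^sub>R P)) \<longlongrightarrow> weighted_indicator X) at_top"
    unfolding softmax_rows_def weighted_indicator_def
    apply (intro tendsto_vec_lambda)
    apply (simp only: vector_scaleR_component real_scaleR_def entry_eq)
    apply (intro tendsto_divide tendsto_sum term_lim)
    apply (simp add: sumpos)
    done
  have "eventually (\<lambda>b. dist (softmax_rows (b *\<^sub>R P)) (weighted_indicator X) < \<epsilon>/2) at_top"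
    using lim eps unfolding tendsto_iff by (meson half_gt_zero)
  then obtain N where N: "\<And>b. b \<ge> N \<Longrightarrow> dist (softmax_rows (b *\<^sub>R P)) (weighted_indicator X) < \<epsilon>/2"
    by (auto simp: eventually_at_top_linorder)
  define b where "b = max N 1"
  have bpos: "b > 0" and bN: "dist (softmax_rows (b *\<^sub>R P)) (weighted_indicator X) < \<epsilon>/2"
    using N b_def by auto
  obtain d where d: "d > 0" and dd: "\<And>Q. dist Q P < d \<Longrightarrow>
      dist (softmax_rows (b *\<^sub>R Q)) (softmax_rows (b *\<^sub>R P)) < \<epsilon>/2"
    using softmax_cont[where b=b and P=P] eps unfolding continuous_at_eps_delta
    by (metis half_gt_zero)
  show "\<exists>\<delta>>0. \<exists>b>0. \<forall>Q :: real^'n^'n. frob_norm (P - Q) < \<delta> \<longrightarrow>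
           frob_norm (softmax_rows (b *\<^sub>R Q) - weighted_indicator X) < \<epsilon>"
  proof -
    have "frob_norm (softmax_rows (b *\<^sub>R Q) - weighted_indicator X) < \<epsilon>"
      if "frob_norm (P - Q) < d" for Q :: "real^'n^'n"
    proof -
    from that
    have "dist Q P < d" by (simp add: frob_eq_norm dist_norm norm_minus_commute)
    then have "dist (softmax_rows (b *\<^sub>R Q)) (softmax_rows (b *\<^sub>R P)) < \<epsilon>/2" by (rule dd)
    then have "dist (softmax_rows (b *\<^sub>R Q)) (weighted_indicator X) < \<epsilon>"
      using bN dist_triangle[of "softmax_rows (b *\<^sub>R Q)" "weighted_indicator X" "softmax_rows (b *\<^sub>R P)"] by linarith
    then show "frob_norm (softmax_rows (b *\<^sub>R Q) - weighted_indicator X) < \<epsilon>"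
      by (simp add: frob_eq_norm dist_norm)
    qed
    then show ?thesis using d bpos by blast
  qed
qed

end
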